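(* Let $x_i,x_j\in\{x_1,\dots,x_n\}$ be adjacent observations, i.e. $x_i<x_j$ and there is no $x'\in\{x_1,\dots,x_n\}$ with $x_i<x'<x_j$. For any $\theta\in\mathbb{V}\cap\Theta$, the result \[\theta^*:=\arg\max_{v\in\mathbb{V}_{D(\theta)}\cap\Theta_1}L(v)\] of a local search over $\mathbb{V}_{D(\theta)}\cap\Theta_1$ has at most two breakpoints between $x_i$ and $x_j$, i.e. $|D(\theta^* )\cap(x_i,x_j)|\le2$.
   Context: Let $f$ be a probability density on $\mathbb{R}_{\ge0}$ satisfying the standing assumptions: (A1) $f$ is continuous and $f(x)>0$ for all $x>0$; (A2) there is $\beta\in\mathbb{R}$ such that for every $\lambda\in\mathbb{R}$, $\int_0^\infty e^{\lambda x}f(x)\,dx<\infty$ if and only if $\lambda<\beta$, and $\lim_{\lambda\to\beta^-}\int_0^\infty e^{\lambda x}f(x)\,dx=\infty$; (A3) for every $\lambda\in\mathbb{R}$, $\int_0^\infty e^{\lambda x}f(x)dx<\infty$ implies $\int_0^\infty x^2e^{\lambda x}f(x)dx<\infty$. Let $M$ be the measure on $\mathbb{R}_{\ge0}$ with density $f$. Fix data $x_1,\dots,x_n$ in $\mathbb{R}_{\ge0}$ with empirical distribution $\hat P=\frac1n\sum_{i=1}^n\delta_{x_i}$. $\Theta$ is the set of convex non-decreasing functions $\theta:\mathbb{R}_{\ge0}\to\mathbb{R}$, and $\Theta_1=\{\theta\in\Theta:\int e^{\theta}dM=1\}$. For $\theta\in\Theta$, $L(\theta):=\int\theta\,d\hat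 P-\int e^{\theta}\,dM+1\in[-\infty,\infty)$. $\mathbb{V}$ is the set of continuous piecewise linear functions $v:\mathbb{R}_{\ge0}\to\mathbb{R}$ with finitely many breakpoints; $D(v)=\{\tau\ge0: v'(\tau-)\neq v'(\tau+)\}$ is its set of breakpoints; for finite $S\subset\mathbb{R}_{\ge0}$, $\mathbb{V}_S=\{v\in\mathbb{V}:D(v)\subseteq S\}$. *)

theory Defs
  imports "HOL-Analysis.Analysis"
begin

text \<open>Functions on the half-line [0,oo) are represented as total functions
  real => real; only their values on {0..} matter for all notions below.\<close>

definition base_measure :: "(real \<Rightarrow> real) \<Rightarrow> real measure" where
  "base_measure f = density lborel (\<lambda>x. ennreal (f x * indicator {0..} x))"

definition standing_assumptions :: "(real \<Rightarrow> real) \<Rightarrow> bool" where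
  "standing_assumptions f \<longleftrightarrow>
     (\<forall>x\<ge>0. f x \<ge> 0) \<and>
     (\<integral>\<^sup>+x. ennreal (f x * indicator {0..} x) \<partial>lborel) = 1 \<and>
     continuous_on {0..} f \<and> (\<forall>x>0. f x > 0) \<and>
     (\<exists>\<beta>::real. (\<forall>l::real. (\<integral>\<^sup>+x. ennreal (exp (l * x)) \<partial>base_measure f) < \<infinity> \<longleftrightarrow> l < \<beta>) \<and>
        ((\<lambda>l. \<integral>\<^sup>+x. ennreal (exp (l * x)) \<partial>base_measure f) \<longlongrightarrow> \<infinity>) (at_left \<beta>)) \<and>
     (\<forall>l::real. (\<integral>\<^sup>+x. ennreal (exp (l * x)) \<partial>base_measure f) < \<infinity> \<longrightarrow>
        (\<integral>\<^sup>+x. ennreal (x\<^sup>2 * exp (l * x)) \<partial>base_measure f) < \<infinity>)"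

definition Theta :: "(real \<Rightarrow> real) set" where
  "Theta = {\<theta>. convex_on {0..} \<theta> \<and> mono_on {0..} \<theta>}"

definition Theta1 :: "(real \<Rightarrow> real) \<Rightarrow> (real \<Rightarrow> real) set" where
  "Theta1 f = {\<theta>\<in>Theta. (\<integral>\<^sup>+x. ennreal (exp (\<theta> x)) \<partial>base_measure f) = 1}"

definition Lfun :: "(real \<Rightarrow> real) \<Rightarrow> (nat \<Rightarrow> real) \<Rightarrow> nat \<Rightarrow> (real \<Rightarrow> real) \<Rightarrow> ereal" where
  "Lfun f x n \<theta> = ereal ((1 / real n) * (\<Sum>k=1..n. \<theta> (x k)))
      - enn2ereal (\<integral>\<^sup>+t. ennreal (exp (\<theta> t)) \<partial>base_measure f) + 1"

definition Vset :: "(real \<Rightarrow> real) set" where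
  "Vset = {v. continuous_on {0..} v \<and>
      (\<exists>S. finite S \<and> (\<forall>a b. 0 \<le> a \<and> a < b \<and> {a<..<b} \<inter> S = {} \<longrightarrow>
            (\<exists>c d. \<forall>t\<in>{a..b}. v t = c * t + d)))}"

text \<open>Breakpoints: points where left and right derivatives differ
  (at 0 there is no left derivative on the half-line, so only tau > 0 can qualify).\<close>
definition breakpoints :: "(real \<Rightarrow> real) \<Rightarrow> real set" where
  "breakpoints v = {\<tau>. 0 < \<tau> \<and> (\<exists>d1 d2. (v has_real_derivative d1) (at_left \<tau>) \<and>
                       (v has_real_derivative d2) (at_right \<tau>) \<and> d1 \<noteq> d2)}"

definition V_on :: "real set \<Rightarrow> (real \<Rightarrow> real) set" where
  "V_on S = {v\<in>Vset. breakpoints v \<subseteq> S}"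

end

theory Submission
  imports Defs
begin

lemma left_deriv_unique:
  fixes g :: "real \<Rightarrow> real"
  assumes "(g has_real_derivative a) (at_left t)" "(g has_real_derivative b) (at_left t)"
  shows "a = b"
  using assms unfolding has_field_derivative_iff
  using tendsto_unique trivial_limit_at_left_real by blast

lemma right_deriv_unique:
  fixes g :: "real \<Rightarrow> real"
  assumes "(g has_real_derivative a) (at_right t)" "(g has_real_derivative b) (at_right t)"
  shows "a = b"
  using assms unfolding has_field_derivative_iff
  using tendsto_unique trivial_limit_at_right_real by blast


lemma cvx_support_left:
  fixes g :: "real \<Rightarrow> real"
  assumes cv: "convex_on {0..} g" and tp: "0 < \<tau>" and d: "(g has_real_derivative d) (at_left \<tau>)" and t: "0 \<le> t"
  shows "g \<tau> + d*(t-\<tau>) \<le> g t"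
proof -
  have lim: "((\<lambda>y. (g y - g \<tau>)/(y - \<tau>)) \<longlongrightarrow> d) (at_left \<tau>)" using d has_field_derivative_iff by blast
  consider "t < \<tau>" | "t = \<tau>" | "t > \<tau>" by linarith
  then show ?thesis
  proof cases
    case 1
    have "eventually (\<lambda>y. (g t - g \<tau>)/(t - \<tau>) \<le> (g y - g \<tau>)/(y - \<tau>)) (at_left \<tau>)"
      using eventually_at_left_real[OF 1]
    proof (rule eventually_mono)
      fix y assume "y \<in> {t<..<\<tau>}"
      then show "(g t - g \<tau>)/(t - \<tau>) \<le> (g y - g \<tau>)/(y - \<tau>)"
        using convex_on_slope_le(2)[OF cv, of t \<tau> y] t tp by auto
    qed
    then have "(g t - g \<tau>)/(t - \<tau>) \<le> d" using tendsto_lowerbound[OF lim _ trivial_limit_at_left_real] by blast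
    then show ?thesis using 1 by (simp add: divide_le_eq algebra_simps)
  next
    case 2 then show ?thesis by simp
  next
    case 3
    have "eventually (\<lambda>y. (g y - g \<tau>)/(y - \<tau>) \<le> (g \<tau> - g t)/(\<tau> - t)) (at_left \<tau>)"
      using eventually_at_left_real[OF tp]
    proof (rule eventually_mono)
      fix y assume y: "y \<in> {0<..<\<tau>}"
      have "(g y - g \<tau>)/(y - \<tau>) \<le> (g y - g t)/(y - t)"
        using convex_on_slope_le(1)[OF cv, of y t \<tau>] t tp y 3 by auto
      also have "\<dots> \<le> (g \<tau> - g t)/(\<tau> - t)"
        using convex_on_slope_le(2)[OF cv, of y t \<tau>] t tp y 3 by auto
      finally show "(g y - g \<tau>)/(y - \<tau>) \<le> (g \<tau> - g t)/(\<tau> - t)" .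
    qed
    then have "d \<le> (g \<tau> - g t)/(\<tau> - t)" using tendsto_upperbound[OF lim _ trivial_limit_at_left_real] by blast
    then show ?thesis using 3 by (simp add: le_divide_eq algebra_simps)
  qed
qed

lemma cvx_support_right:
  fixes g :: "real \<Rightarrow> real"
  assumes cv: "convex_on {0..} g" and tp: "0 < \<tau>" and d: "(g has_real_derivative d) (at_right \<tau>)" and t: "0 \<le> t"
  shows "g \<tau> + d*(t-\<tau>) \<le> g t"
proof -
  have lim: "((\<lambda>y. (g y - g \<tau>)/(y - \<tau>)) \<longlongrightarrow> d) (at_right \<tau>)" using d has_field_derivative_iff by blast
  consider "t < \<tau>" | "t = \<tau>" | "t > \<tau>" by linarith
  then show ?thesis
  proof cases
    case 1
    have "eventually (\<lambda>y. (g t - g \<tau>)/(t - \<tau>) \<le> (g y - g \<tau>)/(y - \<tau>)) (at_right \<tau>)"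
      using eventually_at_right_real[of \<tau> "\<tau>+1"]
    proof (rule eventually_mono)
      fix y assume y: "y \<in> {\<tau><..<\<tau>+1}"
      have "(g t - g \<tau>)/(t - \<tau>) \<le> (g t - g y)/(t - y)"
        using convex_on_slope_le(1)[OF cv, of t y \<tau>] t tp y 1 by auto
      also have "\<dots> \<le> (g \<tau> - g y)/(\<tau> - y)"
        using convex_on_slope_le(2)[OF cv, of t y \<tau>] t tp y 1 by auto
      also have "\<dots> = (g y - g \<tau>)/(y - \<tau>)" by (simp add: divide_simps) (simp add: algebra_simps)
      finally show "(g t - g \<tau>)/(t - \<tau>) \<le> (g y - g \<tau>)/(y - \<tau>)" .
    qed simp
    then have "(g t - g \<tau>)/(t - \<tau>) \<le> d" using tendsto_lowerbound[OF lim _ trivial_limit_at_right_real] by blast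
    then show ?thesis using 1 by (simp add: divide_le_eq algebra_simps)
  next
    case 2 then show ?thesis by simp
  next
    case 3
    have "eventually (\<lambda>y. (g y - g \<tau>)/(y - \<tau>) \<le> (g \<tau> - g t)/(\<tau> - t)) (at_right \<tau>)"
      using eventually_at_right_real[OF 3]
    proof (rule eventually_mono)
      fix y assume y: "y \<in> {\<tau><..<t}"
      have "(g \<tau> - g y)/(\<tau> - y) \<le> (g \<tau> - g t)/(\<tau> - t)"
        using convex_on_slope_le(1)[OF cv, of \<tau> t y] t tp y 3 by auto
      moreover have "(g y - g \<tau>)/(y - \<tau>) = (g \<tau> - g y)/(\<tau> - y)" by (simp add: divide_simps) (simp add: algebra_simps)
      ultimately show "(g y - g \<tau>)/(y - \<tau>) \<le> (g \<tau> - g t)/(\<tau> - t)" by simp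
    qed
    then have "d \<le> (g \<tau> - g t)/(\<tau> - t)" using tendsto_upperbound[OF lim _ trivial_limit_at_right_real] by blast
    then show ?thesis using 3 by (simp add: le_divide_eq algebra_simps)
  qed
qed

lemma left_le_right_deriv:
  fixes g :: "real \<Rightarrow> real"
  assumes cv: "convex_on {0..} g" and tp: "0 < \<tau>" and d1: "(g has_real_derivative d1) (at_left \<tau>)"
    and d2: "(g has_real_derivative d2) (at_right \<tau>)"
  shows "d1 \<le> d2"
proof -
  have lim: "((\<lambda>y. (g y - g \<tau>)/(y - \<tau>)) \<longlongrightarrow> d2) (at_right \<tau>)" using d2 has_field_derivative_iff by blast
  have "eventually (\<lambda>y. d1 \<le> (g y - g \<tau>)/(y - \<tau>)) (at_right \<tau>)"
    using eventually_at_right_real[of \<tau> "\<tau>+1"]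
  proof (rule eventually_mono)
    fix y assume y: "y \<in> {\<tau><..<\<tau>+1}"
    have "g \<tau> + d1*(y-\<tau>) \<le> g y" using cvx_support_left[OF cv tp d1, of y] y tp by auto
    then show "d1 \<le> (g y - g \<tau>)/(y - \<tau>)" using y by (simp add: le_divide_eq algebra_simps)
  qed simp
  then show ?thesis using tendsto_lowerbound[OF lim _ trivial_limit_at_right_real] by blast
qed

lemma mono_left_deriv_nonneg:
  fixes g :: "real \<Rightarrow> real"
  assumes m: "mono_on {0..} g" and tp: "0 < \<tau>" and d: "(g has_real_derivative d) (at_left \<tau>)"
  shows "0 \<le> d"
proof -
  have lim: "((\<lambda>y. (g y - g \<tau>)/(y - \<tau>)) \<longlongrightarrow> d) (at_left \<tau>)" using d has_field_derivative_iff by blast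
  have "eventually (\<lambda>y. 0 \<le> (g y - g \<tau>)/(y - \<tau>)) (at_left \<tau>)"
    using eventually_at_left_real[OF tp]
  proof (rule eventually_mono)
    fix y assume y: "y \<in> {0<..<\<tau>}"
    then have "g y \<le> g \<tau>" using m tp by (auto intro: mono_onD)
    then show "0 \<le> (g y - g \<tau>)/(y - \<tau>)" using y by (intro divide_nonpos_neg) auto
  qed
  then show ?thesis using tendsto_lowerbound[OF lim _ trivial_limit_at_left_real] by blast
qed


lemma convex_glue:
  fixes g :: "real \<Rightarrow> real"
  assumes I: "convex I" and c: "c \<in> I"
    and L: "convex_on {x\<in>I. x \<le> c} g" and R: "convex_on {x\<in>I. c \<le> x} g"
    and s: "\<And>t. t \<in> I \<Longrightarrow> g c + s*(t-c) \<le> g t"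
  shows "convex_on I g"
proof (rule convex_on_linorderI[OF _ I])
  fix t x y :: real assume t: "0<t" "t<1" and xy: "x\<in>I" "y\<in>I" "x<y"
  define z where "z = (1-t)*x + t*y"
  have zx: "z - x = t*(y-x)" and yz: "y - z = (1-t)*(y-x)" unfolding z_def by (simp_all add: algebra_simps)
  have "g z \<le> (1-t)*g x + t*g y"
  proof -
    consider "y \<le> c" | "c \<le> x" | "x < c" "c < y" by linarith
    then show ?thesis
    proof cases
      case 1 then show ?thesis using convex_onD[OF L, of t x y] t xy unfolding z_def by auto
    next
      case 2 then show ?thesis using convex_onD[OF R, of t x y] t xy unfolding z_def by auto
    next
      case 3
      have sx: "g c + s*(x-c) \<le> g x" and sy: "g c + s*(y-c) \<le> g y" using s xy by auto
      show ?thesis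
      proof (cases "z \<le> c")
        case True
        define \<mu> where "\<mu> = (z-x)/(c-x)"
        have mc: "\<mu>*(c-x) = z - x" unfolding \<mu>_def using 3 by simp
        have m0: "0 \<le> \<mu>" unfolding \<mu>_def using 3 zx t xy by auto
        have m1: "\<mu> \<le> 1" unfolding \<mu>_def using 3 True by simp
        have mt: "t \<le> \<mu>"
        proof -
          have "t*(c-x) \<le> t*(y-x)" using t 3 by simp
          then have "t*(c-x) \<le> \<mu>*(c-x)" using mc zx by simp
          then show ?thesis using 3 by simp
        qed
        have zz: "z = (1-\<mu>)*x + \<mu>*c" using mc by (simp add: algebra_simps)
        have "g z \<le> (1-\<mu>)*g x + \<mu>*g c"
          using convex_onD[OF L, of \<mu> x c] m0 m1 xy c 3 zz by auto
        moreover have "0 \<le> (\<mu> - t)*(g x - g c - s*(x-c))" using mt sx by simp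
        moreover have "0 \<le> t*(g y - g c - s*(y-c))" using t sy by simp
        moreover have "s*(\<mu>*(x-c) + t*(y-x)) = 0" using mc zx by (simp add: algebra_simps)
        ultimately show ?thesis by (simp add: algebra_simps)
      next
        case False
        define \<mu> where "\<mu> = (y-z)/(y-c)"
        have mc: "\<mu>*(y-c) = y - z" unfolding \<mu>_def using 3 by simp
        have m0: "0 \<le> \<mu>" unfolding \<mu>_def using 3 yz t xy by auto
        have m1: "\<mu> \<le> 1" unfolding \<mu>_def using 3 False by simp
        have mt: "1 - t \<le> \<mu>"
        proof -
          have "(1-t)*(y-c) \<le> (1-t)*(y-x)" using t 3 by simp
          then have "(1-t)*(y-c) \<le> \<mu>*(y-c)" using mc yz by simp
          then show ?thesis using 3 by simp
        qed
        have zz: "z = (1-\<mu>)*y + \<mu>*c" using mc by (simp add: algebra_simps)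
        have "g z \<le> (1-\<mu>)*g y + \<mu>*g c"
          using convex_onD[OF R, of \<mu> y c] m0 m1 xy c 3 zz by auto
        moreover have "0 \<le> (\<mu> - (1-t))*(g y - g c - s*(y-c))" using mt sy by simp
        moreover have "0 \<le> (1-t)*(g x - g c - s*(x-c))" using t sx by simp
        moreover have "s*(\<mu>*(y-c) + (1-t)*(x-y)) = 0"
        proof -
          have "\<mu>*(y-c) + (1-t)*(x-y) = 0" using mc yz by (simp add: algebra_simps)
          then show ?thesis by simp
        qed
        ultimately show ?thesis by (simp add: algebra_simps)
      qed
    qed
  qed
  then show "g ((1 - t) *\<^sub>R x + t *\<^sub>R y) \<le> (1 - t) * g x + t * g y" unfolding z_def by simp
qed




lemma Vset_breakpoints_finite:
  assumes "v \<in> Vset"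
  shows "finite (breakpoints v)"
proof -
  obtain S where S: "finite S" and lin: "\<And>a b. 0 \<le> a \<Longrightarrow> a < b \<Longrightarrow> {a<..<b} \<inter> S = {} \<Longrightarrow>
            (\<exists>c d. \<forall>t\<in>{a..b}. v t = c * t + d)"
    using assms unfolding Vset_def by blast
  have "breakpoints v \<subseteq> S"
  proof
    fix \<tau> assume "\<tau> \<in> breakpoints v"
    then obtain d1 d2 where tp: "0 < \<tau>" and d1: "(v has_real_derivative d1) (at_left \<tau>)"
      and d2: "(v has_real_derivative d2) (at_right \<tau>)" and ne: "d1 \<noteq> d2"
      unfolding breakpoints_def by blast
    show "\<tau> \<in> S"
    proof (rule ccontr)
      assume nS: "\<tau> \<notin> S"
      obtain \<delta> where dp: "\<delta> > 0" and dS: "\<forall>x\<in>S. x \<noteq> \<tau> \<longrightarrow> \<delta> \<le> dist \<tau> x"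
        using finite_set_avoid[OF S, of \<tau>] by blast
      define e where "e = min \<delta> \<tau> / 2"
      have ep: "e > 0" "e < \<tau>" "e < \<delta>" using dp tp unfolding e_def by auto
      have "{\<tau>-e<..<\<tau>+e} \<inter> S = {}"
      proof (rule ccontr)
        assume "{\<tau>-e<..<\<tau>+e} \<inter> S \<noteq> {}"
        then obtain x where x: "x \<in> S" "\<tau>-e < x" "x < \<tau>+e" by auto
        then have "x \<noteq> \<tau>" using nS by auto
        then have "\<delta> \<le> dist \<tau> x" using dS x by auto
        then show False using x ep by (simp add: dist_real_def)
      qed
      then obtain c d where cd: "\<forall>t\<in>{\<tau>-e..\<tau>+e}. v t = c * t + d"
        using lin[of "\<tau>-e" "\<tau>+e"] ep by auto
      have lind: "((\<lambda>t. c*t+d) has_real_derivative c) (at \<tau> within X)" for X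
        by (auto intro!: derivative_eq_intros)
      have "(v has_real_derivative c) (at_left \<tau>)"
      proof -
        have ev: "\<forall>\<^sub>F x in at_left \<tau>. v x = c * x + d"
          using eventually_at_left_real[of "\<tau>-e" \<tau>] ep cd
          by (auto elim!: eventually_mono)
        have "v \<tau> = c * \<tau> + d" using cd ep by auto
        then show ?thesis by (subst has_field_derivative_cong_eventually[OF ev]) (auto intro: lind)
      qed
      then have "d1 = c" using d1 by (rule left_deriv_unique[rotated])
      have "(v has_real_derivative c) (at_right \<tau>)"
      proof -
        have ev: "\<forall>\<^sub>F x in at_right \<tau>. v x = c * x + d"
          using eventually_at_right_real[of \<tau> "\<tau>+e"] ep cd
          by (auto elim!: eventually_mono)
        have "v \<tau> = c * \<tau> + d" using cd ep by auto
        then show ?thesis by (subst has_field_derivative_cong_eventually[OF ev]) (auto intro: lind)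
      qed
      then have "d2 = c" using d2 by (rule right_deriv_unique[rotated])
      then show False using ne \<open>d1 = c\<close> by simp
    qed
  qed
  then show ?thesis using S finite_subset by blast
qed


definition tent :: "real \<Rightarrow> real \<Rightarrow> real \<Rightarrow> real \<Rightarrow> real" where
  "tent a b c t = max 0 (min ((t-a)/(b-a)) ((c-t)/(c-b)))"

context fixes a b c :: real assumes abc: "a < b" "b < c"
begin

lemma tent_nonneg: "0 \<le> tent a b c t" unfolding tent_def by simp

lemma tent_le1: "tent a b c t \<le> 1"
proof (cases "t \<le> b")
  case True then have "(t-a)/(b-a) \<le> 1" using abc by (simp add: divide_le_eq)
  then show ?thesis unfolding tent_def by simp
next
  case False then have "(c-t)/(c-b) \<le> 1" using abc by (simp add: divide_le_eq)
  then show ?thesis unfolding tent_def by simp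
qed

lemma tent_b: "tent a b c b = 1" unfolding tent_def using abc by simp

lemma tent_out: "t \<le> a \<or> c \<le> t \<Longrightarrow> tent a b c t = 0"
proof -
  assume "t \<le> a \<or> c \<le> t"
  then have "(t-a)/(b-a) \<le> 0 \<or> (c-t)/(c-b) \<le> 0" using abc by (auto simp: divide_le_0_iff)
  then show ?thesis unfolding tent_def by auto
qed

lemma tent_pos: "a < t \<Longrightarrow> t < c \<Longrightarrow> 0 < tent a b c t"
  unfolding tent_def using abc by auto

lemma tent_le_left: "a \<le> t \<Longrightarrow> tent a b c t \<le> (t-a)/(b-a)"
  unfolding tent_def using abc by auto

lemma tent_le_right: "t \<le> c \<Longrightarrow> tent a b c t \<le> (c-t)/(c-b)"
  unfolding tent_def using abc by auto

lemma tent_lin1: "a \<le> t \<Longrightarrow> t \<le> b \<Longrightarrow> tent a b c t = (t-a)/(b-a)"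
proof -
  assume t: "a \<le> t" "t \<le> b"
  have "(t-a)/(b-a) \<le> 1" using abc t by (simp add: divide_le_eq)
  moreover have "1 \<le> (c-t)/(c-b)" using abc t by (simp add: le_divide_eq)
  moreover have "0 \<le> (t-a)/(b-a)" using abc t by simp
  ultimately show ?thesis unfolding tent_def by simp
qed

lemma tent_lin2: "b \<le> t \<Longrightarrow> t \<le> c \<Longrightarrow> tent a b c t = (c-t)/(c-b)"
proof -
  assume t: "b \<le> t" "t \<le> c"
  have "(c-t)/(c-b) \<le> 1" using abc t by (simp add: divide_le_eq)
  moreover have "1 \<le> (t-a)/(b-a)" using abc t by (simp add: le_divide_eq)
  moreover have "0 \<le> (c-t)/(c-b)" using abc t by simp
  ultimately show ?thesis unfolding tent_def by simp
qed

lemma tent_cont: "continuous_on X (tent a b c)"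
  unfolding tent_def by (intro continuous_intros) (use abc in auto)

lemma tent_interval_lin:
  assumes pq: "p < q" and avoid: "{p<..<q} \<inter> {a,b,c} = {}"
  shows "\<exists>kk ll. \<forall>s\<in>{p..q}. tent a b c s = kk * s + ll"
proof -
  have av: "\<And>z. z \<in> {a,b,c} \<Longrightarrow> z \<le> p \<or> q \<le> z" using avoid by auto
  consider "q \<le> a" | "a \<le> p" "q \<le> b" | "b \<le> p" "q \<le> c" | "c \<le> p"
    using av[of a] av[of b] av[of c] abc pq by fastforce
  then show ?thesis
  proof cases
    case 1 then show ?thesis using tent_out by (intro exI[of _ 0]) auto
  next
    case 2
    show ?thesis
      by (rule exI[of _ "1/(b-a)"], rule exI[of _ "-a/(b-a)"])
         (use 2 tent_lin1 in \<open>auto simp: diff_divide_distrib\<close>)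
  next
    case 3
    show ?thesis
      by (rule exI[of _ "-1/(c-b)"], rule exI[of _ "c/(c-b)"])
         (use 3 tent_lin2 in \<open>auto simp: diff_divide_distrib\<close>)
  next
    case 4 then show ?thesis using tent_out by (intro exI[of _ 0]) auto
  qed
qed

lemma tent_local_lin:
  assumes t: "t \<notin> {a,b,c}"
  shows "\<exists>kk ll. eventually (\<lambda>s. tent a b c s = kk * s + ll) (nhds t)"
proof -
  obtain p q where pq: "p < t" "t < q" "{p<..<q} \<inter> {a,b,c} = {}"
  proof -
    consider "t < a" | "a < t" "t < b" | "b < t" "t < c" | "c < t" using t abc by fastforce
    then show ?thesis
    proof cases
      case 1 then show ?thesis using that[of "t-1" a] abc by auto
    next
      case 2 then show ?thesis using that[of a b] abc by auto
    next
      case 3 then show ?thesis using that[of b c] abc by auto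
    next
      case 4 then show ?thesis using that[of c "t+1"] abc by auto
    qed
  qed
  obtain kk ll where kl: "\<forall>s\<in>{p..q}. tent a b c s = kk * s + ll" using tent_interval_lin[OF _ pq(3)] pq by fastforce
  have "eventually (\<lambda>s. s \<in> {p<..<q}) (nhds t)" using pq by (intro eventually_nhds_in_open) auto
  then have "eventually (\<lambda>s. tent a b c s = kk * s + ll) (nhds t)" by eventually_elim (use kl in auto)
  then show ?thesis by blast
qed

end


lemma w_meas:
  assumes "standing_assumptions f"
  shows "(\<lambda>x. ennreal (f x * indicator {0..} x)) \<in> borel_measurable lborel"
proof -
  have c: "continuous_on {0..} f" using assms unfolding standing_assumptions_def by blast
  have "(\<lambda>x. indicator {0..} x *\<^sub>R f x) \<in> borel_measurable borel"
    by (rule borel_measurable_continuous_on_indicator[OF _ c]) simp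
  then have "(\<lambda>x. f x * indicator {0..} x) \<in> borel_measurable borel" by (simp add: mult.commute)
  then show ?thesis by (simp add: measurable_lborel1)
qed

lemma int_pos:
  assumes f: "standing_assumptions f" and g: "g \<in> borel_measurable borel"
    and ab: "0 \<le> a" "a < b" and pos: "\<forall>x\<in>{a<..<b}. 0 < g x"
  shows "(\<integral>\<^sup>+x. ennreal (g x) \<partial>base_measure f) \<noteq> 0"
proof
  assume z: "(\<integral>\<^sup>+x. ennreal (g x) \<partial>base_measure f) = 0"
  have gm: "(\<lambda>x. ennreal (g x)) \<in> borel_measurable lborel" using g by (simp add: measurable_lborel1)
  have "(\<integral>\<^sup>+x. ennreal (f x * indicator {0..} x) * ennreal (g x) \<partial>lborel) = 0"
    using z unfolding base_measure_def by (subst (asm) nn_integral_density[OF w_meas[OF f] gm])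
  then have "AE x in lborel. ennreal (f x * indicator {0..} x) * ennreal (g x) = 0"
    by (subst (asm) nn_integral_0_iff_AE) (use w_meas[OF f] gm in auto)
  then have "AE x in lborel. x \<notin> {a<..<b}"
  proof (rule eventually_mono)
    fix x assume e: "ennreal (f x * indicator {0..} x) * ennreal (g x) = 0"
    show "x \<notin> {a<..<b}"
    proof
      assume x: "x \<in> {a<..<b}"
      then have fx: "f x > 0" using f ab unfolding standing_assumptions_def by auto
      have gx: "g x > 0" using pos x by auto
      show False using e x ab fx gx by (auto simp: indicator_def)
    qed
  qed
  then have "{a<..<b} \<in> null_sets lborel" by (subst AE_iff_null_sets) auto
  then show False using ab by auto
qed


lemma convex_on_cong':
  assumes "convex_on S g" "\<And>x. x \<in> S \<Longrightarrow> h x = g x"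
  shows "convex_on S h"
proof -
  have cS: "convex S" using assms(1) convex_on_imp_convex by blast
  show ?thesis unfolding convex_on_def
  proof (intro conjI cS allI impI ballI)
    fix x y :: 'a and u v :: real assume xy: "x \<in> S" "y \<in> S" and uv: "0 \<le> u" "0 \<le> v" "u + v = 1"
    have "u *\<^sub>R x + v *\<^sub>R y \<in> S" using cS xy uv convexD by blast
    then show "h (u *\<^sub>R x + v *\<^sub>R y) \<le> u * h x + v * h y"
      using assms(1) xy uv assms(2) unfolding convex_on_def by auto
  qed
qed

lemma convex_on_affine: "convex S \<Longrightarrow> convex_on S (\<lambda>t::real. k*t + l)"
  by (rule convex_onI) (auto simp: algebra_simps)

lemma three_ordered:
  fixes A :: "real set"
  assumes "finite A" "2 < card A"
  shows "\<exists>a b c. a \<in> A \<and> b \<in> A \<and> c \<in> A \<and> a < b \<and> b < c"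
proof -
  have ne: "A \<noteq> {}" using assms by auto
  define a where "a = Min A"
  have a: "a \<in> A" "\<forall>y\<in>A. a \<le> y" using assms ne unfolding a_def by auto
  define A' where "A' = A - {a}"
  have cA': "1 < card A'" "finite A'" using assms a unfolding A'_def by auto
  then have ne': "A' \<noteq> {}" by auto
  define b where "b = Min A'"
  have b: "b \<in> A'" "\<forall>y\<in>A'. b \<le> y" using cA' ne' unfolding b_def by auto
  define A'' where "A'' = A' - {b}"
  have "0 < card A''" using cA' b unfolding A''_def by auto
  then obtain c where c: "c \<in> A''" by (metis card_gt_0_iff ex_in_conv)
  have "a < b" using a b unfolding A'_def by force
  moreover have "b < c" using b c unfolding A''_def by force
  ultimately show ?thesis using a b c unfolding A'_def A''_def by blast
qed


lemma main_contra:
  fixes f :: "real \<Rightarrow> real" and x :: "nat \<Rightarrow> real" and n i j :: nat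
    and \<theta> \<theta>s :: "real \<Rightarrow> real"
  assumes f: "standing_assumptions f"
    and n: "n \<ge> 1"
    and data: "\<forall>k\<in>{1..n}. x k \<ge> 0"
    and adj: "\<not> (\<exists>k\<in>{1..n}. x i < x k \<and> x k < x j)"
    and tau: "x i < \<tau>1" "\<tau>1 < \<tau>2" "\<tau>2 < \<tau>3" "\<tau>3 < x j" "0 < \<tau>1"
    and tb: "\<tau>1 \<in> breakpoints \<theta>s" "\<tau>2 \<in> breakpoints \<theta>s" "\<tau>3 \<in> breakpoints \<theta>s"
    and V: "\<theta>s \<in> Vset" and cvx: "convex_on {0..} \<theta>s" and mon: "mono_on {0..} \<theta>s"
    and one: "(\<integral>\<^sup>+t. ennreal (exp (\<theta>s t)) \<partial>base_measure f) = 1"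
    and bsub: "breakpoints \<theta>s \<subseteq> breakpoints \<theta>"
    and \<theta>s_max: "\<forall>v\<in>V_on (breakpoints \<theta>) \<inter> Theta1 f. Lfun f x n v \<le> Lfun f x n \<theta>s"
  shows False
proof -
  obtain d1 d2 where d1: "(\<theta>s has_real_derivative d1) (at_left \<tau>1)"
      and d2: "(\<theta>s has_real_derivative d2) (at_right \<tau>1)" and d12: "d1 \<noteq> d2"
    using tb(1) unfolding breakpoints_def by blast
  obtain e1 e2 where e1: "(\<theta>s has_real_derivative e1) (at_left \<tau>3)"
      and e2: "(\<theta>s has_real_derivative e2) (at_right \<tau>3)" and e12: "e1 \<noteq> e2"
    using tb(3) unfolding breakpoints_def by blast
  obtain s2 where s2: "(\<theta>s has_real_derivative s2) (at_left \<tau>2)"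
    using tb(2) unfolding breakpoints_def by blast
  have tp: "0 < \<tau>2" "0 < \<tau>3" using tau by auto
  have d12l: "d1 < d2" using left_le_right_deriv[OF cvx tau(5) d1 d2] d12 by simp
  have e12l: "e1 < e2" using left_le_right_deriv[OF cvx tp(2) e1 e2] e12 by simp
  have d1p: "0 \<le> d1" using mono_left_deriv_nonneg[OF mon tau(5) d1] .
  define \<epsilon> where "\<epsilon> = min ((d2-d1)*(\<tau>2-\<tau>1)) ((e2-e1)*(\<tau>3-\<tau>2))"
  have ep: "0 < \<epsilon>" "\<epsilon> \<le> (d2-d1)*(\<tau>2-\<tau>1)" "\<epsilon> \<le> (e2-e1)*(\<tau>3-\<tau>2)"
    unfolding \<epsilon>_def using d12l e12l tau by auto
  define h where "h = tent \<tau>1 \<tau>2 \<tau>3"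
  have abc: "\<tau>1 < \<tau>2" "\<tau>2 < \<tau>3" using tau by auto
  note hnn = tent_nonneg[OF abc, folded h_def]
  note hle1 = tent_le1[OF abc, folded h_def]
  note hb = tent_b[OF abc, folded h_def]
  note hout = tent_out[OF abc, folded h_def]
  note hpos = tent_pos[OF abc, folded h_def]
  note hleL = tent_le_left[OF abc, folded h_def]
  note hleR = tent_le_right[OF abc, folded h_def]
  note hlin1 = tent_lin1[OF abc, folded h_def]
  note hlin2 = tent_lin2[OF abc, folded h_def]
  define g where "g t = \<theta>s (max 0 t) - \<epsilon> * h t" for t
  have g0: "g t = \<theta>s t - \<epsilon> * h t" if "0 \<le> t" for t using that unfolding g_def by simp
  have cont_s: "continuous_on {0..} \<theta>s" using V unfolding Vset_def by blast
  have cont0: "continuous_on UNIV (\<lambda>t. \<theta>s (max 0 t))"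
    by (rule continuous_on_compose2[OF cont_s]) (auto intro!: continuous_intros)
  have contg: "continuous_on UNIV g" unfolding g_def h_def
    by (intro continuous_intros cont0 tent_cont[OF abc])
  have S1: "g \<tau>1 + d1*(t-\<tau>1) \<le> g t" if t: "0 \<le> t" for t
  proof -
    have gt1: "g \<tau>1 = \<theta>s \<tau>1" using g0[of \<tau>1] hout[of \<tau>1] tau by simp
    show ?thesis
    proof (cases "t \<le> \<tau>1")
      case True
      then show ?thesis using g0[OF t] hout[of t] gt1 cvx_support_left[OF cvx tau(5) d1 t] by simp
    next
      case False
      have a: "\<theta>s \<tau>1 + d2*(t-\<tau>1) \<le> \<theta>s t" using cvx_support_right[OF cvx tau(5) d2 t] .
      have "\<epsilon> * h t \<le> \<epsilon> * ((t-\<tau>1)/(\<tau>2-\<tau>1))"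
        using hleL[of t] False ep by (intro mult_left_mono) auto
      also have "\<dots> \<le> (d2-d1)*(t-\<tau>1)"
      proof -
        have "\<epsilon> * (t-\<tau>1) \<le> ((d2-d1)*(\<tau>2-\<tau>1)) * (t-\<tau>1)"
          using ep False by (intro mult_right_mono) auto
        then have "\<epsilon> * (t-\<tau>1) / (\<tau>2-\<tau>1) \<le> ((d2-d1)*(\<tau>2-\<tau>1)) * (t-\<tau>1) / (\<tau>2-\<tau>1)"
          using abc by (intro divide_right_mono) auto
        moreover have "((d2-d1)*(\<tau>2-\<tau>1)) * (t-\<tau>1) / (\<tau>2-\<tau>1) = (d2-d1)*(t-\<tau>1)" using abc by (simp add: field_simps)
        ultimately show ?thesis by simp
      qed
      finally show ?thesis using a g0[OF t] gt1 by (simp add: algebra_simps)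
    qed
  qed
  have S2: "g \<tau>2 + s2*(t-\<tau>2) \<le> g t" if t: "0 \<le> t" for t
  proof -
    have gt2: "g \<tau>2 = \<theta>s \<tau>2 - \<epsilon>" using g0[of \<tau>2] hb tp by simp
    have "\<epsilon> * h t \<le> \<epsilon>" using hle1[of t] ep by (simp add: mult_left_le)
    then show ?thesis using gt2 g0[OF t] cvx_support_left[OF cvx tp(1) s2 t] by simp
  qed
  have S3: "g \<tau>3 + e2*(t-\<tau>3) \<le> g t" if t: "0 \<le> t" for t
  proof -
    have gt3: "g \<tau>3 = \<theta>s \<tau>3" using g0[of \<tau>3] hout[of \<tau>3] tp by simp
    show ?thesis
    proof (cases "\<tau>3 \<le> t")
      case True
      then show ?thesis using g0[OF t] hout[of t] gt3 cvx_support_right[OF cvx tp(2) e2 t] by simp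
    next
      case False
      have a: "\<theta>s \<tau>3 + e1*(t-\<tau>3) \<le> \<theta>s t" using cvx_support_left[OF cvx tp(2) e1 t] .
      have "\<epsilon> * h t \<le> \<epsilon> * ((\<tau>3-t)/(\<tau>3-\<tau>2))"
        using hleR[of t] False ep by (intro mult_left_mono) auto
      also have "\<dots> \<le> (e2-e1)*(\<tau>3-t)"
      proof -
        have "\<epsilon> * (\<tau>3-t) \<le> ((e2-e1)*(\<tau>3-\<tau>2)) * (\<tau>3-t)"
          using ep False by (intro mult_right_mono) auto
        then have "\<epsilon> * (\<tau>3-t) / (\<tau>3-\<tau>2) \<le> ((e2-e1)*(\<tau>3-\<tau>2)) * (\<tau>3-t) / (\<tau>3-\<tau>2)"
          using abc by (intro divide_right_mono) auto
        moreover have "((e2-e1)*(\<tau>3-\<tau>2)) * (\<tau>3-t) / (\<tau>3-\<tau>2) = (e2-e1)*(\<tau>3-t)" using abc by (simp add: field_simps)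
        ultimately show ?thesis by simp
      qed
      finally show ?thesis using a g0[OF t] gt3 by (simp add: algebra_simps)
    qed
  qed
  have C1: "convex_on {0..\<tau>1} g"
    by (rule convex_on_cong'[OF convex_on_subset[OF cvx]]) (use g0 hout in auto)
  have C2: "convex_on {\<tau>1..\<tau>2} g"
  proof (rule convex_on_cong')
    show "convex_on {\<tau>1..\<tau>2} (\<lambda>t. \<theta>s t + ((-\<epsilon>/(\<tau>2-\<tau>1))*t + \<epsilon>*\<tau>1/(\<tau>2-\<tau>1)))"
      by (intro convex_on_add convex_on_subset[OF cvx] convex_on_affine) (use tau in auto)
    fix t assume t: "t \<in> {\<tau>1..\<tau>2}"
    then show "g t = \<theta>s t + ((-\<epsilon>/(\<tau>2-\<tau>1))*t + \<epsilon>*\<tau>1/(\<tau>2-\<tau>1))"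
      using g0[of t] hlin1[of t] tau by (auto simp: diff_divide_distrib algebra_simps)
  qed
  have C3: "convex_on {\<tau>2..\<tau>3} g"
  proof (rule convex_on_cong')
    show "convex_on {\<tau>2..\<tau>3} (\<lambda>t. \<theta>s t + ((\<epsilon>/(\<tau>3-\<tau>2))*t - \<epsilon>*\<tau>3/(\<tau>3-\<tau>2)))"
      by (intro convex_on_add convex_on_subset[OF cvx] convex_on_affine[where l="- \<epsilon>*\<tau>3/(\<tau>3-\<tau>2)", simplified]) (use tau in auto)
    fix t assume t: "t \<in> {\<tau>2..\<tau>3}"
    then show "g t = \<theta>s t + ((\<epsilon>/(\<tau>3-\<tau>2))*t - \<epsilon>*\<tau>3/(\<tau>3-\<tau>2))"
      using g0[of t] hlin2[of t] tau by (auto simp: diff_divide_distrib algebra_simps)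
  qed
  have C4: "convex_on {\<tau>3..} g"
    by (rule convex_on_cong'[OF convex_on_subset[OF cvx]]) (use g0 hout tau in auto)
  have C12: "convex_on {0..\<tau>2} g"
  proof -
    have "{x \<in> {0..\<tau>2}. x \<le> \<tau>1} = {0..\<tau>1}" "{x \<in> {0..\<tau>2}. \<tau>1 \<le> x} = {\<tau>1..\<tau>2}" using tau by auto
    then show ?thesis using convex_glue[of "{0..\<tau>2}" \<tau>1 g d1] C1 C2 S1 tau by auto
  qed
  have C123: "convex_on {0..\<tau>3} g"
  proof -
    have "{x \<in> {0..\<tau>3}. x \<le> \<tau>2} = {0..\<tau>2}" "{x \<in> {0..\<tau>3}. \<tau>2 \<le> x} = {\<tau>2..\<tau>3}" using tau by auto
    then show ?thesis using convex_glue[of "{0..\<tau>3}" \<tau>2 g s2] C12 C3 S2 tau by auto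
  qed
  have cvxg: "convex_on {0..} g"
  proof -
    have "{x \<in> {0..}. x \<le> \<tau>3} = {0..\<tau>3}" "{x \<in> {0..}. \<tau>3 \<le> x} = {\<tau>3..}" using tau by auto
    then show ?thesis using convex_glue[of "{0..}" \<tau>3 g e2] C123 C4 S3 tau by auto
  qed
  have gmono: "mono_on {0..} g"
  proof (rule mono_onI)
    fix a b :: real assume ab: "a \<in> {0..}" "b \<in> {0..}" "a \<le> b"
    have ge1: "g \<tau>1 \<le> g t" if "\<tau>1 \<le> t" for t
      using S1[of t] that tau d1p by (smt (verit) mult_nonneg_nonneg)
    have gs: "g t = \<theta>s t" if "0 \<le> t" "t \<le> \<tau>1" for t using g0 hout that by simp
    show "g a \<le> g b"
    proof -
      consider "b \<le> \<tau>1" | "a \<le> \<tau>1" "\<tau>1 < b" | "\<tau>1 < a" by linarith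
      then show ?thesis
      proof cases
        case 1 then show ?thesis using gs ab mon by (auto intro: mono_onD)
      next
        case 2
        have "g a \<le> g \<tau>1" using gs[of a] gs[of \<tau>1] ab 2 tau mon by (auto intro: mono_onD)
        then show ?thesis using ge1[of b] 2 by simp
      next
        case 3
        show ?thesis
        proof (cases "a = b")
          case False
          then have ab': "a < b" using ab by simp
          define lam where "lam = (a - \<tau>1)/(b - \<tau>1)"
          have l: "0 \<le> lam" "lam \<le> 1" unfolding lam_def using 3 ab' by auto
          have lb: "lam * (b - \<tau>1) = a - \<tau>1" unfolding lam_def using 3 ab' by simp
          have "(1-lam) * \<tau>1 + lam * b = a" using lb by (simp add: algebra_simps)
          then have "g a \<le> (1-lam) * g \<tau>1 + lam * g b"
            using convex_onD[OF cvxg, of lam \<tau>1 b] l tau ab by auto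
          also have "\<dots> \<le> (1-lam) * g b + lam * g b"
            using ge1[of b] 3 ab' l by (intro add_right_mono mult_left_mono) auto
          finally show ?thesis by (simp add: algebra_simps)
        qed simp
      qed
    qed
  qed
  let ?M = "base_measure f"
  have gmeas[measurable]: "g \<in> borel_measurable borel" using contg by (rule borel_measurable_continuous_onI)
  have cont0e: "continuous_on UNIV (\<lambda>t. exp (\<theta>s (max 0 t)))" by (intro continuous_intros cont0)
  have Fmeas[measurable]: "(\<lambda>t. exp (\<theta>s (max 0 t))) \<in> borel_measurable borel"
    using cont0e by (rule borel_measurable_continuous_onI)
  have msets: "measurable ?M = measurable borel" unfolding base_measure_def
    by (intro ext measurable_cong_sets) simp_all
  have AEpos: "AE t in ?M. 0 \<le> t" unfolding base_measure_def
    by (subst AE_density[OF w_meas[OF f]]) (auto simp: indicator_def)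
  have F1: "(\<integral>\<^sup>+t. ennreal (exp (\<theta>s (max 0 t))) \<partial>?M) = 1"
    unfolding one[symmetric] by (rule nn_integral_cong_AE) (use AEpos in \<open>auto elim!: eventually_mono\<close>)
  have gle: "g t \<le> \<theta>s (max 0 t)" for t unfolding g_def using hnn[of t] ep by simp
  define I where "I = (\<integral>\<^sup>+t. ennreal (exp (g t)) \<partial>?M)"
  define J where "J = (\<integral>\<^sup>+t. ennreal (exp (\<theta>s (max 0 t)) - exp (g t)) \<partial>?M)"
  have IJ: "I + J = 1"
  proof -
    have "(\<integral>\<^sup>+t. ennreal (exp (\<theta>s (max 0 t))) \<partial>?M)
        = (\<integral>\<^sup>+t. ennreal (exp (g t)) + ennreal (exp (\<theta>s (max 0 t)) - exp (g t)) \<partial>?M)"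
      using gle by (intro nn_integral_cong) (simp add: ennreal_plus[symmetric])
    also have "\<dots> = I + J" unfolding I_def J_def
      by (rule nn_integral_add) (simp_all add: msets)
    finally show ?thesis using F1 by simp
  qed
  have J0: "J \<noteq> 0" unfolding J_def
  proof (rule int_pos[OF f _ _ tau(2)[THEN less_trans[OF _ tau(3)]]])
    show "(\<lambda>t. exp (\<theta>s (max 0 t)) - exp (g t)) \<in> borel_measurable borel" by measurable
    show "0 \<le> \<tau>1" using tau by simp
    show "\<forall>t\<in>{\<tau>1<..<\<tau>3}. 0 < exp (\<theta>s (max 0 t)) - exp (g t)"
    proof
      fix t assume t: "t \<in> {\<tau>1<..<\<tau>3}"
      then have "0 < \<epsilon> * h t" using hpos[of t] ep by simp
      then have "g t < \<theta>s (max 0 t)" unfolding g_def by simp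
      then show "0 < exp (\<theta>s (max 0 t)) - exp (g t)" by simp
    qed
  qed
  have I0: "I \<noteq> 0" unfolding I_def
    by (rule int_pos[OF f _ _ zero_less_one]) (auto simp: measurable)
  obtain r where r: "I = ennreal r" "0 < r" "r < 1"
  proof -
    have "I \<le> I + J" by simp
    then have I1: "I \<le> 1" using IJ by simp
    then have "I < \<infinity>" using le_less_trans[OF I1 ennreal_one_less_top] by simp
    show ?thesis
    proof (cases I rule: ennreal_cases)
      case (real r)
      have "r \<noteq> 0" using I0 real by simp
      moreover have "r < 1"
      proof (rule ccontr)
        assume "\<not> r < 1"
        then have "1 \<le> I" using real by simp
        then have "I = 1" using I1 by simp
        then have "J = 0" using IJ by simp
        then show False using J0 by simp
      qed
      ultimately show ?thesis using that real by simp
    next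
      case top then show ?thesis using \<open>I < \<infinity>\<close> by simp
    qed
  qed
  define c0 where "c0 = ln r"
  have c0n: "c0 < 0" unfolding c0_def using r by simp
  define \<theta>n where "\<theta>n t = g t - c0" for t
  have int_n: "(\<integral>\<^sup>+t. ennreal (exp (\<theta>n t)) \<partial>?M) = 1"
  proof -
    have "(\<integral>\<^sup>+t. ennreal (exp (\<theta>n t)) \<partial>?M) = (\<integral>\<^sup>+t. ennreal (exp (g t)) * ennreal (exp (-c0)) \<partial>?M)"
      unfolding \<theta>n_def by (intro nn_integral_cong) (simp add: ennreal_mult[symmetric] exp_diff exp_minus divide_inverse)
    also have "\<dots> = I * ennreal (exp (-c0))" unfolding I_def
      by (rule nn_integral_multc) (simp add: msets)
    also have "\<dots> = 1" using r unfolding c0_def by (simp add: exp_minus ennreal_mult[symmetric])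
    finally show ?thesis .
  qed
  have contn: "continuous_on UNIV \<theta>n" unfolding \<theta>n_def by (intro continuous_intros contg)
  obtain S where S: "finite S" and lin: "\<And>a b. 0 \<le> a \<Longrightarrow> a < b \<Longrightarrow> {a<..<b} \<inter> S = {} \<Longrightarrow>
            (\<exists>c d. \<forall>t\<in>{a..b}. \<theta>s t = c * t + d)"
    using V unfolding Vset_def by blast
  have Vn: "\<theta>n \<in> Vset"
    unfolding Vset_def
  proof (intro CollectI conjI exI[of _ "S \<union> {\<tau>1,\<tau>2,\<tau>3}"] allI impI)
    show "continuous_on {0..} \<theta>n" using contn by (rule continuous_on_subset) simp
    show "finite (S \<union> {\<tau>1,\<tau>2,\<tau>3})" using S by simp
    fix a b :: real assume ab: "0 \<le> a \<and> a < b \<and> {a<..<b} \<inter> (S \<union> {\<tau>1,\<tau>2,\<tau>3}) = {}"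
    obtain c1 d1' where cd1: "\<forall>t\<in>{a..b}. \<theta>s t = c1 * t + d1'" using lin[of a b] ab by blast
    obtain kk ll where kl: "\<forall>t\<in>{a..b}. tent \<tau>1 \<tau>2 \<tau>3 t = kk * t + ll"
      using tent_interval_lin[OF abc, of a b] ab by blast
    show "\<exists>c d. \<forall>t\<in>{a..b}. \<theta>n t = c * t + d"
    proof (intro exI ballI)
      fix t assume t: "t \<in> {a..b}"
      then have "0 \<le> t" using ab by simp
      then show "\<theta>n t = (c1 - \<epsilon>*kk) * t + (d1' - \<epsilon>*ll - c0)"
        unfolding \<theta>n_def using g0[of t] cd1 kl t unfolding h_def by (simp add: algebra_simps)
    qed
  qed
  have Bn: "breakpoints \<theta>n \<subseteq> breakpoints \<theta>"
  proof
    fix \<tau> assume "\<tau> \<in> breakpoints \<theta>n"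
    then obtain D1 D2 where tp0: "0 < \<tau>" and D1: "(\<theta>n has_real_derivative D1) (at_left \<tau>)"
      and D2: "(\<theta>n has_real_derivative D2) (at_right \<tau>)" and D12: "D1 \<noteq> D2"
      unfolding breakpoints_def by blast
    show "\<tau> \<in> breakpoints \<theta>"
    proof (cases "\<tau> \<in> {\<tau>1,\<tau>2,\<tau>3}")
      case True then show ?thesis using tb bsub by auto
    next
      case False
      obtain kk ll where kl: "eventually (\<lambda>s. tent \<tau>1 \<tau>2 \<tau>3 s = kk * s + ll) (nhds \<tau>)"
        using tent_local_lin[OF abc False] by blast
      have "eventually (\<lambda>s. s \<in> {0<..}) (nhds \<tau>)" using tp0 by (intro eventually_nhds_in_open) auto
      with kl have evn: "eventually (\<lambda>s. \<theta>n s + (\<epsilon>*(kk * s + ll) + c0) = \<theta>s s) (nhds \<tau>)"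
        by eventually_elim (auto simp: \<theta>n_def g_def h_def)
      have evw: "eventually (\<lambda>s. \<theta>n s + (\<epsilon>*(kk * s + ll) + c0) = \<theta>s s) (at \<tau> within X)" for X
        using evn unfolding eventually_at_filter by (auto elim: eventually_mono)
      have val: "\<theta>n \<tau> + (\<epsilon>*(kk*\<tau>+ll) + c0) = \<theta>s \<tau>" using evn by (auto simp: eventually_nhds)
      have L: "((\<lambda>s. \<theta>n s + (\<epsilon>*(kk * s + ll) + c0)) has_real_derivative D1 + \<epsilon>*kk) (at_left \<tau>)"
        by (auto intro!: derivative_eq_intros D1)
      have R: "((\<lambda>s. \<theta>n s + (\<epsilon>*(kk * s + ll) + c0)) has_real_derivative D2 + \<epsilon>*kk) (at_right \<tau>)"
        by (auto intro!: derivative_eq_intros D2)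
      have L': "(\<theta>s has_real_derivative D1 + \<epsilon>*kk) (at_left \<tau>)"
        using L by (subst (asm) has_field_derivative_cong_eventually[OF evw val])
      have R': "(\<theta>s has_real_derivative D2 + \<epsilon>*kk) (at_right \<tau>)"
        using R by (subst (asm) has_field_derivative_cong_eventually[OF evw val])
      have "\<tau> \<in> breakpoints \<theta>s" unfolding breakpoints_def using tp0 L' R' D12 by (intro CollectI conjI exI[of _ "D1 + \<epsilon>*kk"] exI[of _ "D2 + \<epsilon>*kk"]) auto
      then show ?thesis using bsub by auto
    qed
  qed
  have Tn: "\<theta>n \<in> Theta" unfolding Theta_def
  proof (intro CollectI conjI)
    show "convex_on {0..} \<theta>n"
      by (rule convex_on_cong'[OF convex_on_add[OF cvxg convex_on_const[THEN iffD2, of _ "-c0"]]])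
         (auto simp: \<theta>n_def)
    show "mono_on {0..} \<theta>n" using gmono unfolding \<theta>n_def by (auto simp: mono_on_def)
  qed
  have mem: "\<theta>n \<in> V_on (breakpoints \<theta>) \<inter> Theta1 f"
    unfolding V_on_def Theta1_def using Vn Bn Tn int_n by auto
  have le: "Lfun f x n \<theta>n \<le> Lfun f x n \<theta>s" using \<theta>s_max mem by blast
  have xk: "\<theta>n (x k) = \<theta>s (x k) - c0" if k: "k \<in> {1..n}" for k
  proof -
    have "x k \<le> x i \<or> x j \<le> x k" using adj k by force
    then have "x k \<le> \<tau>1 \<or> \<tau>3 \<le> x k" using tau by auto
    then have "h (x k) = 0" using hout by simp
    then show ?thesis using g0[of "x k"] data k unfolding \<theta>n_def by simp
  qed
  have sumn: "(\<Sum>k=1..n. \<theta>n (x k)) = (\<Sum>k=1..n. \<theta>s (x k)) - real n * c0"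
    using xk by (simp add: sum_subtractf)
  define A where "A = (\<Sum>k=1..n. \<theta>s (x k))"
  have e1: "enn2ereal 1 = 1" by (simp add: one_ennreal.rep_eq)
  have "(1 / real n) * (A - real n * c0) = (1 / real n) * A - c0" using n by (simp add: field_simps)
  then have "Lfun f x n \<theta>n = ereal ((1 / real n) * A - c0) - 1 + 1"
    unfolding Lfun_def using int_n sumn A_def e1 by simp
  moreover have "Lfun f x n \<theta>s = ereal ((1 / real n) * A) - 1 + 1"
    unfolding Lfun_def using one A_def e1 by simp
  ultimately have "ereal ((1 / real n) * A - c0) - 1 + 1 \<le> ereal ((1 / real n) * A) - 1 + 1" using le by simp
  then have "(1 / real n) * A - c0 \<le> (1 / real n) * A" by (simp add: one_ereal_def)
  then show False using c0n by simp
qed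


theorem mainTheorem7:
  fixes f :: "real \<Rightarrow> real" and x :: "nat \<Rightarrow> real" and n i j :: nat
    and \<theta> \<theta>s :: "real \<Rightarrow> real"
  assumes f: "standing_assumptions f"
    and n: "n \<ge> 1"
    and data: "\<forall>k\<in>{1..n}. x k \<ge> 0"
    and ij: "i \<in> {1..n}" "j \<in> {1..n}" "x i < x j"
    and adj: "\<not> (\<exists>k\<in>{1..n}. x i < x k \<and> x k < x j)"
    and \<theta>: "\<theta> \<in> Vset \<inter> Theta"
    and \<theta>s_mem: "\<theta>s \<in> V_on (breakpoints \<theta>) \<inter> Theta1 f"
    and \<theta>s_max: "\<forall>v\<in>V_on (breakpoints \<theta>) \<inter> Theta1 f. Lfun f x n v \<le> Lfun f x n \<theta>s"
  shows "finite (breakpoints \<theta>s \<inter> {x i<..<x j}) \<and> card (breakpoints \<theta>s \<inter> {x i<..<x j}) \<le> 2"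
proof -
  have V: "\<theta>s \<in> Vset" and bsub: "breakpoints \<theta>s \<subseteq> breakpoints \<theta>"
    and cvx: "convex_on {0..} \<theta>s" and mon: "mono_on {0..} \<theta>s"
    and one: "(\<integral>\<^sup>+t. ennreal (exp (\<theta>s t)) \<partial>base_measure f) = 1"
    using \<theta>s_mem unfolding V_on_def Theta1_def Theta_def by auto
  have fin: "finite (breakpoints \<theta>s \<inter> {x i<..<x j})"
    using Vset_breakpoints_finite[OF V] by simp
  moreover have "card (breakpoints \<theta>s \<inter> {x i<..<x j}) \<le> 2"
  proof (rule ccontr)
    assume "\<not> card (breakpoints \<theta>s \<inter> {x i<..<x j}) \<le> 2"
    then obtain a b c where abc: "a \<in> breakpoints \<theta>s \<inter> {x i<..<x j}" "b \<in> breakpoints \<theta>s \<inter> {x i<..<x j}"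
      "c \<in> breakpoints \<theta>s \<inter> {x i<..<x j}" "a < b" "b < c"
      using three_ordered[OF fin] by force
    have "0 \<le> x i" using data ij by auto
    then have "0 < a" using abc by auto
    show False
      by (rule main_contra[OF f n data adj _ _ _ _ _ _ _ _ V cvx mon one bsub \<theta>s_max, of a b c])
         (use abc \<open>0 < a\<close> in auto)
  qed
  ultimately show ?thesis by blast
qed

end
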